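(* Let $A\in\mathbb{R}^{n\times p}$ be an arbitrary matrix with $n<p$, and let $x^\circ\in\mathbb{R}^p$ be arbitrary. Then for each $q\in[0,2]$ there exists a non-zero vector $\tilde x\in\mathbb{R}^p$ with $A\tilde x=Ax^\circ$ and $$s_q(\tilde x)\ge\frac1{\pi e}\Big(1-\frac np\Big)^2 p.$$ Also, for $q\in(2,\infty]$ there exists a non-zero vector $\bar x\in\mathbb{R}^p$ with $A\bar x=Ax^\circ$ and $$s_q(\bar x)\ge\frac{\sqrt{\frac2{\pi e}}\,(p-n)}{1+\sqrt{16\log(2p)}}.$$
   Context: For $x\in\mathbb{R}^p\setminus\{0\}$ let $\pi_j(x):=|x_j|/\|x\|_1$. For $q\notin\{0,1,\infty\}$, $s_q(x):=(\|x\|_q/\|x\|_1)^{q/(1-q)}$; $s_0(x):=\|x\|_0$ (number of nonzero entries), $s_1(x):=\exp\big(-\sum_j\pi_j(x)\log\pi_j(x)\big)$, $s_\infty(x):=\|x\|_1/\|x\|_\infty$. *)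

theory Defs
  imports "HOL-Analysis.Analysis"
begin

definition l1norm :: "real^'p \<Rightarrow> real" where
  "l1norm x = (\<Sum>j\<in>UNIV. \<bar>x $ j\<bar>)"

definition lqnorm :: "real \<Rightarrow> real^'p \<Rightarrow> real" where
  "lqnorm q x = (\<Sum>j\<in>UNIV. \<bar>x $ j\<bar> powr q) powr (1 / q)"

definition linfnorm :: "real^'p \<Rightarrow> real" where
  "linfnorm x = Max (range (\<lambda>j. \<bar>x $ j\<bar>))"

definition l0norm :: "real^'p \<Rightarrow> nat" where
  "l0norm x = card {j. x $ j \<noteq> 0}"

definition piv :: "real^'p \<Rightarrow> 'p \<Rightarrow> real" where
  "piv x j = \<bar>x $ j\<bar> / l1norm x"

text \<open>Numerical sparsity s_q, q \<in> [0,\<infinity>] given as an extended real.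
  Convention 0 log 0 = 0 holds since ln 0 = 0 in Isabelle.\<close>
definition sq :: "ereal \<Rightarrow> real^'p \<Rightarrow> real" where
  "sq q x =
    (if q = 0 then real (l0norm x)
     else if q = 1 then exp (- (\<Sum>j\<in>UNIV. piv x j * ln (piv x j)))
     else if q = \<infinity> then l1norm x / linfnorm x
     else (lqnorm (real_of_ereal q) x / l1norm x)
             powr (real_of_ereal q / (1 - real_of_ereal q)))"

end

theory Submission
  imports Defs
begin
lemma exists_y:
  fixes A :: "real^'p^'n" and T :: "'p set"
  assumes "card T + CARD('n) < CARD('p)"
  shows "\<exists>y. y \<noteq> 0 \<and> A *v y = 0 \<and> (\<forall>j\<in>T. y $ j = 0)"
proof (rule ccontr)
  assume H: "\<not> ?thesis"
  define d where "d = (\<lambda>j. axis j (1::real)) ` (- T)"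
  define W where "W = {x::real^'p. \<forall>i\<in>Basis. i \<notin> d \<longrightarrow> x \<bullet> i = 0}"
  have dB: "d \<subseteq> Basis" unfolding d_def by (auto simp: Basis_vec_def)
  have cd: "card d = CARD('p) - card T"
    unfolding d_def by (subst card_image) (auto simp: inj_on_def axis_eq_axis Compl_eq_Diff_UNIV card_Diff_subset)
  have dimW: "dim W = CARD('p) - card T" using dim_substandard[OF dB] cd W_def by simp
  have Wchar: "x \<in> W \<Longrightarrow> j \<in> T \<Longrightarrow> x $ j = 0" for x j
    unfolding W_def d_def by (auto simp: Basis_vec_def cart_eq_inner_axis axis_eq_axis)
  have sW: "subspace W" unfolding W_def by (rule subspace_substandard)
  have lin: "linear ((*v) A)" by (simp add: matrix_vector_mul_linear)
  have "inj_on ((*v) A) W"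
    using H Wchar by (subst linear_inj_on_iff_eq_0[OF lin sW]) blast
  hence "inj_on ((*v) A) (span W)" using sW by (simp add: span_eq_iff[THEN iffD2, OF sW])
  hence "dim ((*v) A ` W) = dim W" using dim_image_eq[OF lin] by blast
  moreover have "dim ((*v) A ` W) \<le> CARD('n)" using dim_subset_UNIV[of "(*v) A ` W"] by simp
  ultimately show False using dimW assms by linarith
qed


lemma linf_ge: "\<bar>x $ j\<bar> \<le> linfnorm x"
  unfolding linfnorm_def by (rule Max_ge) auto

lemma linf_attained: "\<exists>j. \<bar>x $ j\<bar> = linfnorm x"
proof -
  have "linfnorm x \<in> range (\<lambda>j. \<bar>x $ j\<bar>)" unfolding linfnorm_def by (rule Max_in) auto
  thus ?thesis by auto
qed

lemma linf_pos: "x \<noteq> 0 \<Longrightarrow> linfnorm x > 0"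
proof -
  assume "x \<noteq> 0"
  then obtain j where "x $ j \<noteq> 0" by (auto simp: vec_eq_iff)
  thus ?thesis using linf_ge[of x j] by linarith
qed

lemma linf_eqI: "(\<And>j. \<bar>x $ j\<bar> \<le> M) \<Longrightarrow> \<bar>x $ k\<bar> = M \<Longrightarrow> linfnorm x = M"
  unfolding linfnorm_def by (rule Max_eqI) auto

lemma step:
  fixes A :: "real^'p^'n" and x x0 :: "real^'p"
  assumes xnz: "x \<noteq> 0" and Ax: "A *v x = A *v x0"
    and c: "card {j. \<bar>x $ j\<bar> = linfnorm x} + CARD('n) < CARD('p)"
  shows "\<exists>x'. x' \<noteq> 0 \<and> A *v x' = A *v x0 \<and>
           card {j. \<bar>x $ j\<bar> = linfnorm x} < card {j. \<bar>x' $ j\<bar> = linfnorm x'}"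
proof -
  define M where "M = linfnorm x"
  define T where "T = {j. \<bar>x $ j\<bar> = M}"
  have Mpos: "M > 0" using linf_pos[OF xnz] M_def by simp
  have xle: "\<And>j. \<bar>x $ j\<bar> \<le> M" using linf_ge M_def by simp
  obtain y where ynz: "y \<noteq> 0" and Ay: "A *v y = 0" and yT: "\<forall>j\<in>T. y $ j = 0"
    using exists_y[OF c[folded M_def, folded T_def]] by blast
  define J where "J = {j. y $ j \<noteq> 0}"
  have Jne: "J \<noteq> {}" using ynz by (auto simp: J_def vec_eq_iff)
  have finJ: "finite J" by simp
  have xlt: "\<And>j. j \<in> J \<Longrightarrow> \<bar>x $ j\<bar> < M" using xle yT J_def T_def
    by (metis (mono_tags, lifting) less_eq_real_def mem_Collect_eq)
  define tj where "tj j = (if y $ j > 0 then (M - x $ j) / y $ j else (- M - x $ j) / y $ j)" for j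
  have tjpos: "\<And>j. j \<in> J \<Longrightarrow> tj j > 0"
  proof -
    fix j assume j: "j \<in> J"
    have "y $ j \<noteq> 0" using j J_def by simp
    thus "tj j > 0" using xlt[OF j] unfolding tj_def
      by (auto intro!: divide_pos_pos divide_neg_neg)
  qed
  define t where "t = Min (tj ` J)"
  have "t \<in> tj ` J" unfolding t_def using Jne by (intro Min_in) auto
  then obtain k where kJ: "k \<in> J" and tk: "t = tj k" by auto
  have tle: "\<And>j. j \<in> J \<Longrightarrow> t \<le> tj j" unfolding t_def by (rule Min_le) auto
  have tpos: "t > 0" using tjpos[OF kJ] tk by simp
  define x' where "x' = x + t *\<^sub>R y"
  have x'c: "\<And>j. x' $ j = x $ j + t * y $ j" by (simp add: x'_def)
  have bnd: "\<bar>x' $ j\<bar> \<le> M" for j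
  proof (cases "j \<in> J")
    case False then show ?thesis using xle[of j] by (simp add: x'c J_def)
  next
    case True
    have t1: "t \<le> tj j" using tle[OF True] .
    have xl: "\<bar>x $ j\<bar> < M" using xlt[OF True] .
    show ?thesis
    proof (cases "y $ j > 0")
      case pos: True
      have "t * y $ j \<le> M - x $ j" using t1 pos by (simp add: tj_def pos_le_divide_eq)
      moreover have "t * y $ j \<ge> 0" using tpos pos by simp
      ultimately show ?thesis using xl by (simp add: x'c)
    next
      case False
      hence neg: "y $ j < 0" using True J_def by auto
      have "t * y $ j \<ge> - M - x $ j" using t1 neg by (simp add: tj_def neg_le_divide_eq)
      moreover have "t * y $ j \<le> 0" using tpos neg by (simp add: mult_nonneg_nonpos)
      ultimately show ?thesis using xl by (simp add: x'c)
    qed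
  qed
  have kM: "\<bar>x' $ k\<bar> = M"
  proof -
    have yk: "y $ k \<noteq> 0" using kJ J_def by simp
    show ?thesis
    proof (cases "y $ k > 0")
      case True
      hence "x' $ k = M" using yk by (simp add: x'c tk tj_def)
      thus ?thesis using Mpos by simp
    next
      case False
      hence "x' $ k = - M" using yk by (simp add: x'c tk tj_def)
      thus ?thesis using Mpos by simp
    qed
  qed
  have L': "linfnorm x' = M" by (rule linf_eqI[OF bnd kM])
  have sub: "T \<subset> {j. \<bar>x' $ j\<bar> = linfnorm x'}"
  proof
    show "T \<subseteq> {j. \<bar>x' $ j\<bar> = linfnorm x'}" using yT by (auto simp: L' x'c T_def)
    have "k \<notin> T" using xlt[OF kJ] T_def by auto
    thus "T \<noteq> {j. \<bar>x' $ j\<bar> = linfnorm x'}" using kM L' by auto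
  qed
  have "card T < card {j. \<bar>x' $ j\<bar> = linfnorm x'}" by (rule psubset_card_mono) (auto simp: sub)
  moreover have "x' \<noteq> 0" using kM Mpos by auto
  moreover have "A *v x' = A *v x0" using Ax Ay
    by (simp add: x'_def matrix_vector_right_distrib matrix_vector_mult_scaleR)
  ultimately show ?thesis unfolding T_def M_def by blast
qed
lemma l1_pos: "x \<noteq> 0 \<Longrightarrow> l1norm x > 0"
proof -
  assume "x \<noteq> 0"
  then obtain j where j: "x $ j \<noteq> 0" by (auto simp: vec_eq_iff)
  have "\<bar>x $ j\<bar> \<le> l1norm x" unfolding l1norm_def
    by (rule member_le_sum) auto
  thus ?thesis using j by linarith
qed

lemma pow_term_lt1:
  fixes a m r :: real
  assumes "0 \<le> a" "a \<le> m" "r < 1"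
  shows "a * m powr (r - 1) \<le> a powr r"
proof (cases "a = 0")
  case False
  hence ap: "a > 0" using assms(1) by (auto simp: less_le)
  have "a powr r = a * a powr (r - 1)" using ap by (simp add: powr_diff)
  moreover have "m powr (r - 1) \<le> a powr (r - 1)" using assms ap by (intro powr_mono2') auto
  ultimately show ?thesis using ap by simp
qed simp

lemma pow_term_gt1:
  fixes a m r :: real
  assumes "0 \<le> a" "a \<le> m" "r > 1"
  shows "a powr r \<le> a * m powr (r - 1)"
proof (cases "a = 0")
  case False
  hence ap: "a > 0" using assms(1) by (auto simp: less_le)
  have "a powr r = a * a powr (r - 1)" using ap by (simp add: powr_diff)
  moreover have "a powr (r - 1) \<le> m powr (r - 1)" using assms ap by (intro powr_mono2) auto
  ultimately show ?thesis using ap by simp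
qed (use assms in simp)

lemma sq_ge:
  fixes x :: "real^'p"
  assumes xnz: "x \<noteq> 0" and q: "0 \<le> q"
  shows "l1norm x / linfnorm x \<le> sq q x"
proof -
  define L where "L = l1norm x"
  define m where "m = linfnorm x"
  have Lp: "L > 0" using l1_pos[OF xnz] L_def by simp
  have mp: "m > 0" using linf_pos[OF xnz] m_def by simp
  have xle: "\<And>j. \<bar>x $ j\<bar> \<le> m" using linf_ge m_def by simp
  have Ls: "L = (\<Sum>j\<in>UNIV. \<bar>x $ j\<bar>)" by (simp add: L_def l1norm_def)
  show ?thesis
  proof (cases "q = 0")
    case True
    define S where "S = {j. x $ j \<noteq> 0}"
    have "L = (\<Sum>j\<in>S. \<bar>x $ j\<bar>)" unfolding Ls S_def by (rule sum.mono_neutral_right) auto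
    also have "\<dots> \<le> (\<Sum>j\<in>S. m)" by (rule sum_mono) (use xle in auto)
    also have "\<dots> = real (card S) * m" by simp
    finally have "L / m \<le> real (card S)" using mp by (simp add: divide_le_eq)
    thus ?thesis using True by (simp add: sq_def l0norm_def S_def L_def m_def)
  next
    case q0: False
    show ?thesis
    proof (cases "q = 1")
      case True
      have pv: "\<And>j. piv x j = \<bar>x $ j\<bar> / L" by (simp add: piv_def L_def)
      have s1: "(\<Sum>j\<in>UNIV. piv x j) = 1" using Lp by (simp add: pv Ls sum_divide_distrib[symmetric])
      have "(\<Sum>j\<in>UNIV. piv x j * ln (piv x j)) \<le> (\<Sum>j\<in>UNIV. piv x j * ln (m / L))"
      proof (rule sum_mono)
        fix j
        show "piv x j * ln (piv x j) \<le> piv x j * ln (m / L)"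
        proof (cases "x $ j = 0")
          case False
          hence "piv x j > 0" using Lp by (simp add: pv)
          moreover have "piv x j \<le> m / L" using xle[of j] Lp by (simp add: pv divide_right_mono)
          ultimately show ?thesis by (simp add: mult_left_mono)
        qed (simp add: pv)
      qed
      also have "\<dots> = ln (m / L)" by (simp add: sum_distrib_right[symmetric] s1)
      finally have "ln (L / m) \<le> - (\<Sum>j\<in>UNIV. piv x j * ln (piv x j))"
        using Lp mp by (simp add: ln_div)
      hence e1: "exp (ln (L / m)) \<le> exp (- (\<Sum>j\<in>UNIV. piv x j * ln (piv x j)))" by simp
      have e2: "exp (ln (L / m)) = L / m" using Lp mp by simp
      have "L / m \<le> exp (- (\<Sum>j\<in>UNIV. piv x j * ln (piv x j)))" using e1 e2 by linarith
      thus ?thesis using True unfolding sq_def L_def m_def by simp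
    next
      case q1: False
      show ?thesis
      proof (cases "q = \<infinity>")
        case True thus ?thesis by (simp add: sq_def)
      next
        case qi: False
        define r where "r = real_of_ereal q"
        have qr: "q = ereal r" using q qi r_def by (cases q) auto
        have rp: "r > 0" using q q0 qr by auto
        have r1: "r \<noteq> 1" using q1 qr by auto
        define S where "S = (\<Sum>j\<in>UNIV. \<bar>x $ j\<bar> powr r)"
        have Sp: "S > 0"
        proof -
          obtain j where j: "x $ j \<noteq> 0" using xnz by (auto simp: vec_eq_iff)
          have "\<bar>x $ j\<bar> powr r \<le> S" unfolding S_def by (rule member_le_sum) auto
          moreover have "\<bar>x $ j\<bar> powr r > 0" using j by simp
          ultimately show ?thesis by linarith
        qed
        have sqv: "sq q x = (S powr (1 / r) / L) powr (r / (1 - r))"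
          using q0 q1 qi qr by (simp add: sq_def lqnorm_def S_def L_def)
        have lnsq: "ln (sq q x) = (ln S - r * ln L) / (1 - r)"
          using Sp Lp rp r1 by (simp add: sqv ln_powr ln_div field_simps)
        have key: "ln (L / m) \<le> (ln S - r * ln L) / (1 - r)"
        proof (cases "r < 1")
          case True
          have "(\<Sum>j\<in>UNIV. \<bar>x $ j\<bar> * m powr (r - 1)) \<le> S"
            unfolding S_def by (rule sum_mono) (use pow_term_lt1 xle True in auto)
          hence "L * m powr (r - 1) \<le> S" by (simp add: Ls sum_distrib_right)
          hence "ln (L * m powr (r - 1)) \<le> ln S" using Lp mp by (intro ln_mono) auto
          hence "ln L + (r - 1) * ln m \<le> ln S" using Lp mp by (simp add: ln_mult ln_powr)
          hence "(ln L - ln m) * (1 - r) \<le> ln S - r * ln L" by (simp add: algebra_simps)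
          hence "ln L - ln m \<le> (ln S - r * ln L) / (1 - r)" using True by (simp add: pos_le_divide_eq)
          thus ?thesis using Lp mp by (simp add: ln_div)
        next
          case False
          hence rg: "r > 1" using r1 by simp
          have "S \<le> (\<Sum>j\<in>UNIV. \<bar>x $ j\<bar> * m powr (r - 1))"
            unfolding S_def by (rule sum_mono) (use pow_term_gt1 xle rg in auto)
          hence "S \<le> L * m powr (r - 1)" by (simp add: Ls sum_distrib_right)
          hence "ln S \<le> ln (L * m powr (r - 1))" using Sp by (intro ln_mono) auto
          hence "ln S \<le> ln L + (r - 1) * ln m" using Lp mp by (simp add: ln_mult ln_powr)
          hence "ln S - r * ln L \<le> (ln L - ln m) * (1 - r)" by (simp add: algebra_simps)
          hence "ln L - ln m \<le> (ln S - r * ln L) / (1 - r)" using rg by (simp add: neg_le_divide_eq)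
          thus ?thesis using Lp mp by (simp add: ln_div)
        qed
        have sqp: "sq q x > 0" using Sp Lp by (simp add: sqv)
        have "exp (ln (L / m)) \<le> exp (ln (sq q x))" using key lnsq by simp
        moreover have "exp (ln (L / m)) = L / m" using Lp mp by simp
        ultimately show ?thesis using sqp by (simp add: L_def m_def)
      qed
    qed
  qed
qed

lemma exists_good:
  fixes A :: "real^'p^'n" and x0 :: "real^'p"
  assumes "CARD('n) < CARD('p)"
  shows "\<exists>x. x \<noteq> 0 \<and> A *v x = A *v x0 \<and> CARD('p) - CARD('n) \<le> card {j. \<bar>x $ j\<bar> = linfnorm x}"
proof -
  have "\<forall>k. k \<le> CARD('p) - CARD('n) \<longrightarrow>
     (\<exists>x. x \<noteq> 0 \<and> A *v x = A *v x0 \<and> k \<le> card {j. \<bar>x $ j\<bar> = linfnorm x})"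
  proof
    fix k show "k \<le> CARD('p) - CARD('n) \<longrightarrow>
     (\<exists>x. x \<noteq> 0 \<and> A *v x = A *v x0 \<and> k \<le> card {j. \<bar>x $ j\<bar> = linfnorm x})"
    proof (induction k)
      case 0
      show ?case
      proof (cases "x0 = 0")
        case False thus ?thesis by auto
      next
        case True
        obtain y :: "real^'p" where "y \<noteq> 0" "A *v y = 0"
          using exists_y[of "{}::'p set" A] assms by auto
        thus ?thesis using True by auto
      qed
    next
      case (Suc k)
      show ?case
      proof
        assume h: "Suc k \<le> CARD('p) - CARD('n)"
        then obtain x where x: "x \<noteq> 0" "A *v x = A *v x0" "k \<le> card {j. \<bar>x $ j\<bar> = linfnorm x}"
          using Suc.IH by auto
        show "\<exists>x. x \<noteq> 0 \<and> A *v x = A *v x0 \<and> Suc k \<le> card {j. \<bar>x $ j\<bar> = linfnorm x}"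
        proof (cases "Suc k \<le> card {j. \<bar>x $ j\<bar> = linfnorm x}")
          case True thus ?thesis using x by auto
        next
          case False
          hence "card {j. \<bar>x $ j\<bar> = linfnorm x} + CARD('n) < CARD('p)" using h x(3) by linarith
          from step[OF x(1) x(2) this] obtain x' where "x' \<noteq> 0" "A *v x' = A *v x0"
            "card {j. \<bar>x $ j\<bar> = linfnorm x} < card {j. \<bar>x' $ j\<bar> = linfnorm x'}" by blast
          thus ?thesis using x(3) by (intro exI[of _ x']) auto
        qed
      qed
    qed
  qed
  thus ?thesis by blast
qed

lemma ratio_ge_card:
  fixes x :: "real^'p"
  assumes "x \<noteq> 0"
  shows "real (card {j. \<bar>x $ j\<bar> = linfnorm x}) \<le> l1norm x / linfnorm x"
proof -
  define T where "T = {j. \<bar>x $ j\<bar> = linfnorm x}"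
  have mp: "linfnorm x > 0" using linf_pos[OF assms] .
  have "real (card T) * linfnorm x = (\<Sum>j\<in>T. \<bar>x $ j\<bar>)" by (simp add: T_def)
  also have "\<dots> \<le> (\<Sum>j\<in>UNIV. \<bar>x $ j\<bar>)" by (rule sum_mono2) auto
  finally show ?thesis using mp by (simp add: T_def l1norm_def le_divide_eq)
qed

theorem lemma3:
  fixes A :: "real^'p^'n" and x0 :: "real^'p"
  assumes "CARD('n) < CARD('p)"
  shows "(\<forall>q::ereal. 0 \<le> q \<and> q \<le> 2 \<longrightarrow>
            (\<exists>x::real^'p. x \<noteq> 0 \<and> A *v x = A *v x0 \<and>
               sq q x \<ge> 1 / (pi * exp 1) * (1 - real CARD('n) / real CARD('p))^2
                          * real CARD('p)))
       \<and> (\<forall>q::ereal. 2 < q \<longrightarrow>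
            (\<exists>x::real^'p. x \<noteq> 0 \<and> A *v x = A *v x0 \<and>
               sq q x \<ge> sqrt (2 / (pi * exp 1)) * (real CARD('p) - real CARD('n))
                          / (1 + sqrt (16 * ln (2 * real CARD('p))))))"
proof -
  obtain x where x: "x \<noteq> 0" "A *v x = A *v x0"
    "CARD('p) - CARD('n) \<le> card {j. \<bar>x $ j\<bar> = linfnorm x}"
    using exists_good[OF assms] by blast
  define P where "P = real CARD('p)"
  define N where "N = real CARD('n)"
  have NP: "N < P" using assms by (simp add: P_def N_def)
  have N0: "N \<ge> 0" by (simp add: N_def)
  have D: "P - N \<le> l1norm x / linfnorm x"
  proof -
    have "real (CARD('p) - CARD('n)) \<le> real (card {j. \<bar>x $ j\<bar> = linfnorm x})" using x(3) by simp
    moreover have "real (CARD('p) - CARD('n)) = P - N" using assms by (simp add: P_def N_def of_nat_diff)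
    ultimately show ?thesis using ratio_ge_card[OF x(1)] by linarith
  qed
  have sqx: "\<And>q. 0 \<le> q \<Longrightarrow> P - N \<le> sq q x" using D sq_ge[OF x(1)] by (meson order_trans)
  have pe: "pi * exp 1 \<ge> 2"
  proof -
    have "exp (1::real) \<ge> 1 + 1" using exp_ge_add_one_self[of 1] by simp
    moreover have "pi \<ge> 1" using pi_gt3 by simp
    ultimately have "pi * exp 1 \<ge> 1 * 2" by (intro mult_mono) auto
    thus ?thesis by simp
  qed
  have R1: "1 / (pi * exp 1) * (1 - N / P)^2 * P \<le> P - N"
  proof -
    have Pp: "P > 0" using NP N0 by linarith
    have "(1 - N / P)^2 * P = (P - N) * ((P - N) / P)" using Pp by (simp add: power2_eq_square field_simps)
    also have "\<dots> \<le> (P - N) * 1" using NP N0 Pp by (intro mult_left_mono) auto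
    finally have a: "(1 - N / P)^2 * P \<le> P - N" by simp
    have b: "1 / (pi * exp 1) \<le> 1" using pe by simp
    have "1 / (pi * exp 1) * ((1 - N / P)^2 * P) \<le> 1 * (P - N)"
      using a b pe Pp by (intro mult_mono) auto
    thus ?thesis by (simp add: mult.assoc)
  qed
  have R2: "sqrt (2 / (pi * exp 1)) * (P - N) / (1 + sqrt (16 * ln (2 * P))) \<le> P - N"
  proof -
    have s1: "sqrt (2 / (pi * exp 1)) \<le> 1" using pe by simp
    have "sqrt (2 / (pi * exp 1)) * (P - N) \<le> 1 * (P - N)" using s1 NP by (intro mult_right_mono) auto
    moreover have den: "1 + sqrt (16 * ln (2 * P)) \<ge> 1"
    proof -
      have "P \<ge> 1" using NP N0 by (simp add: P_def)
      hence "ln (2 * P) \<ge> 0" by simp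
      thus ?thesis by simp
    qed
    moreover have "(P - N) * 1 \<le> (P - N) * (1 + sqrt (16 * ln (2 * P)))"
      using den NP by (intro mult_left_mono) auto
    ultimately have "sqrt (2 / (pi * exp 1)) * (P - N) \<le> (P - N) * (1 + sqrt (16 * ln (2 * P)))"
      by linarith
    moreover have dp: "1 + sqrt (16 * ln (2 * P)) > 0" using den by linarith
    ultimately show ?thesis by (simp only: pos_divide_le_eq[OF dp])
  qed
  show ?thesis
  proof (intro conjI allI impI)
    fix q :: ereal assume "0 \<le> q \<and> q \<le> 2"
    thus "\<exists>x::real^'p. x \<noteq> 0 \<and> A *v x = A *v x0 \<and>
               sq q x \<ge> 1 / (pi * exp 1) * (1 - real CARD('n) / real CARD('p))^2 * real CARD('p)"
      using x sqx R1 unfolding P_def N_def by (meson order_trans)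
  next
    fix q :: ereal assume "2 < q"
    hence "0 \<le> q" by (cases q) auto
    thus "\<exists>x::real^'p. x \<noteq> 0 \<and> A *v x = A *v x0 \<and>
               sq q x \<ge> sqrt (2 / (pi * exp 1)) * (real CARD('p) - real CARD('n))
                          / (1 + sqrt (16 * ln (2 * real CARD('p))))"
      using x sqx R2 unfolding P_def N_def by (meson order_trans)
  qed
qed

end
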